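(* For each $h\in\{1,2\}$, let $\mathrm{bd}_h\in\mathbb{BD}_n$ be a non-empty rational BD shape represented by the closed graph $G_h=(\mathcal{N},w_h)$, and let $R_h$ be a subgraph of $G_h$ such that $\mathrm{closure}(R_h)=G_h$. Let $G_1\sqcup G_2=(\mathcal{N},w)$. Then $\mathrm{bd}_1\uplus\mathrm{bd}_2\neq\mathrm{bd}_1\cup\mathrm{bd}_2$ if and only if there exist an arc $(i,j)$ of $R_1$ and an arc $(k,\ell)$ of $R_2$ such that (1) $w_1(i,j)<w_2(i,j)$ and $w_2(k,\ell)<w_1(k,\ell)$; and (2) $w_1(i,j)+w_2(k,\ell)<w(i,\ell)+w(k,j)$.
   Context: Let $\mathbb{Q}_\infty=\mathbb{Q}\cup\{+\infty\}$ with $d<+\infty$ and $d+(+\infty)=+\infty$ for all $d$. Let $\mathcal{N}=\{0,1,\dots,n\}$. A graph is a pair $(\mathcal{N},w)$ with $w:\mathcal{N}\times\mathcal{N}\to\mathbb{Q}_\infty$; $(i,j)$ is an arc if $w(i,j)<+\infty$. A path $n_0\cdots n_p$ has weight $\sum_{t=1}^p w(n_{t-1},n_t)$; the graph is consistent if it has no cycle of negative weight. Graphs are ordered by $G\unlhd G'$ iff $w(i,j)\le w'(i,j)$ for all $i,j$. A consistent graph is closed if $w(i,i)=0$ for all $i$ and $w(i,j)\le w(i,k)+w(k,j)$ for all $i,j,k$. The closure $\mathrm{closure}(G)$ of a consistent graph $G$ is the least upper bound (pointwise maximum) of all closed graphs $G^c\unlhd G$. $R=(\mathcal{N},w_R)$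 is a subgraph of $G=(\mathcal{N},w_G)$ if every arc of $R$ is an arc of $G$ with the same weight. A BD (bounded difference) shape is a subset of $\mathbb{R}^n$ defined by finitely many constraints of the forms $\pm x_i\le b$ or $x_i-x_j\le b$ ($i\neq j$, $b\in\mathbb{Q}$); $\mathbb{BD}_n$ is the set of them. A consistent graph $G=(\mathcal{N},w)$ represents the BD shape $\{\mathbf{x}\in\mathbb{R}^n : x_i-x_j\le w(i,j)\ \forall i,j\in\mathcal{N}\}$ where $x_0:=0$ (arc $(i,j)$ encodes $x_i-x_j\le w(i,j)$, $(i,0)$ encodes $x_i\le w(i,0)$, $(0,j)$ encodes $-x_j\le w(0,j)$). $G_1\sqcup G_2=(\mathcal{N},w)$ with $w(i,j)=\max(w_1(i,j),w_2(i,j))$. $\mathrm{bd}_1\uplus\mathrm{bd}_2$ is the least BD shape containing $\mathrm{bd}_1\cup\mathrm{bd}_2$; when $G_1,G_2$ are closed it is represented by $G_1\sqcup G_2$. *)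

theory Defs
  imports Main "HOL.Real"
begin

datatype qinf = Fin rat | PInf

instantiation qinf :: linorder
begin

fun less_eq_qinf :: "qinf \<Rightarrow> qinf \<Rightarrow> bool" where
  "less_eq_qinf (Fin a) (Fin b) = (a \<le> b)"
| "less_eq_qinf _ PInf = True"
| "less_eq_qinf PInf (Fin _) = False"

fun less_qinf :: "qinf \<Rightarrow> qinf \<Rightarrow> bool" where
  "less_qinf (Fin a) (Fin b) = (a < b)"
| "less_qinf (Fin _) PInf = True"
| "less_qinf PInf _ = False"

instance
proof
  fix x y z :: qinf
  show "(x < y) = (x \<le> y \<and> \<not> y \<le> x)"
    by (cases x; cases y) auto
  show "x \<le> x" by (cases x) auto
  show "x \<le> y \<Longrightarrow> y \<le> z \<Longrightarrow> x \<le> z"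
    by (cases x; cases y; cases z) auto
  show "x \<le> y \<Longrightarrow> y \<le> x \<Longrightarrow> x = y"
    by (cases x; cases y) auto
  show "x \<le> y \<or> y \<le> x"
    by (cases x; cases y) auto
qed

end

instantiation qinf :: plus
begin
fun plus_qinf :: "qinf \<Rightarrow> qinf \<Rightarrow> qinf" where
  "plus_qinf (Fin a) (Fin b) = Fin (a + b)"
| "plus_qinf _ _ = PInf"
instance ..
end

text \<open>A graph on N = {0,...,n} is a weight function w :: nat => nat => qinf; only
  the values on {0..n} x {0..n} are relevant.  (i,j) is an arc iff w i j < PInf.\<close>

type_synonym graph = "nat \<Rightarrow> nat \<Rightarrow> qinf"

fun path_weight :: "graph \<Rightarrow> nat list \<Rightarrow> qinf" where
  "path_weight w (a # b # rest) = w a b + path_weight w (b # rest)"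
| "path_weight w _ = Fin 0"

definition is_arc :: "nat \<Rightarrow> graph \<Rightarrow> nat \<Rightarrow> nat \<Rightarrow> bool" where
  "is_arc n w i j \<longleftrightarrow> i \<le> n \<and> j \<le> n \<and> w i j < PInf"

definition consistent :: "nat \<Rightarrow> graph \<Rightarrow> bool" where
  "consistent n w \<longleftrightarrow>
     \<not> (\<exists>ns. set ns \<subseteq> {..n} \<and> 2 \<le> length ns \<and> hd ns = last ns
              \<and> path_weight w ns < Fin 0)"

definition graph_le :: "nat \<Rightarrow> graph \<Rightarrow> graph \<Rightarrow> bool" where
  "graph_le n w w' \<longleftrightarrow> (\<forall>i\<le>n. \<forall>j\<le>n. w i j \<le> w' i j)"

definition closed_graph :: "nat \<Rightarrow> graph \<Rightarrow> bool" where
  "closed_graph n w \<longleftrightarrow> consistent n w \<and> (\<forall>i\<le>n. w i i = Fin 0)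
     \<and> (\<forall>i\<le>n. \<forall>j\<le>n. \<forall>k\<le>n. w i j \<le> w i k + w k j)"

definition is_closure :: "nat \<Rightarrow> graph \<Rightarrow> graph \<Rightarrow> bool" where
  "is_closure n G C \<longleftrightarrow> consistent n G
     \<and> (\<forall>Gc. closed_graph n Gc \<and> graph_le n Gc G \<longrightarrow> graph_le n Gc C)
     \<and> (\<forall>U. (\<forall>Gc. closed_graph n Gc \<and> graph_le n Gc G \<longrightarrow> graph_le n Gc U)
             \<longrightarrow> graph_le n C U)"

definition subgraph :: "nat \<Rightarrow> graph \<Rightarrow> graph \<Rightarrow> bool" where
  "subgraph n R G \<longleftrightarrow> (\<forall>i j. is_arc n R i j \<longrightarrow> is_arc n G i j \<and> G i j = R i j)"

definition graph_join :: "graph \<Rightarrow> graph \<Rightarrow> graph" where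
  "graph_join w1 w2 = (\<lambda>i j. max (w1 i j) (w2 i j))"

text \<open>Points of R^n are represented as functions x :: nat => real with x i = 0
  outside {1..n}; in particular x 0 = 0, matching the convention x_0 := 0.\<close>
definition space :: "nat \<Rightarrow> (nat \<Rightarrow> real) set" where
  "space n = {x. \<forall>i. (i = 0 \<or> n < i) \<longrightarrow> x i = 0}"

datatype bd_constraint = Upper nat rat | Lower nat rat | Diff nat nat rat

fun sat :: "(nat \<Rightarrow> real) \<Rightarrow> bd_constraint \<Rightarrow> bool" where
  "sat x (Upper i b) = (x i \<le> of_rat b)"
| "sat x (Lower i b) = (- x i \<le> of_rat b)"
| "sat x (Diff i j b) = (x i - x j \<le> of_rat b)"

fun valid_constraint :: "nat \<Rightarrow> bd_constraint \<Rightarrow> bool" where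
  "valid_constraint n (Upper i b) = (1 \<le> i \<and> i \<le> n)"
| "valid_constraint n (Lower i b) = (1 \<le> i \<and> i \<le> n)"
| "valid_constraint n (Diff i j b) = (1 \<le> i \<and> i \<le> n \<and> 1 \<le> j \<and> j \<le> n \<and> i \<noteq> j)"

definition BD :: "nat \<Rightarrow> (nat \<Rightarrow> real) set set" where
  "BD n = {S. \<exists>C. finite C \<and> (\<forall>c\<in>C. valid_constraint n c)
                 \<and> S = {x \<in> space n. \<forall>c\<in>C. sat x c}}"

definition bd_of :: "nat \<Rightarrow> graph \<Rightarrow> (nat \<Rightarrow> real) set" where
  "bd_of n w = {x \<in> space n. \<forall>i\<le>n. \<forall>j\<le>n. \<forall>b. w i j = Fin b \<longrightarrow> x i - x j \<le> of_rat b}"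

definition represents :: "nat \<Rightarrow> graph \<Rightarrow> (nat \<Rightarrow> real) set \<Rightarrow> bool" where
  "represents n w S \<longleftrightarrow> consistent n w \<and> S = bd_of n w"

definition bd_hull :: "nat \<Rightarrow> (nat \<Rightarrow> real) set \<Rightarrow> (nat \<Rightarrow> real) set \<Rightarrow> (nat \<Rightarrow> real) set" where
  "bd_hull n S1 S2 = (THE S. S \<in> BD n \<and> S1 \<union> S2 \<subseteq> S
                          \<and> (\<forall>T\<in>BD n. S1 \<union> S2 \<subseteq> T \<longrightarrow> S \<subseteq> T))"

end

theory Submission
  imports Defs
begin

instance qinf :: ordered_ab_semigroup_add
proof
  fix a b c :: qinf
  show "a + b + c = a + (b + c)" by (cases a; cases b; cases c) auto
  show "a + b = b + a" by (cases a; cases b) auto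
  show "a \<le> b \<Longrightarrow> c + a \<le> c + b" by (cases a; cases b; cases c) auto
qed

lemma q_simps[simp]: "x + PInf = PInf" "PInf + x = PInf" "Fin 0 + x = x" "x + Fin 0 = x"
  "(x::qinf) \<le> PInf" "\<not> PInf \<le> Fin r" "Fin r < PInf" "\<not> PInf < x"
  by (cases x; simp)+

lemma q_plus_fin: "(u::qinf) + v = Fin s \<Longrightarrow> \<exists>s1 s2. u = Fin s1 \<and> v = Fin s2 \<and> s = s1 + s2"
  by (cases u; cases v) auto

lemma q_nonneg_add: "Fin 0 \<le> c \<Longrightarrow> (a::qinf) \<le> a + c"
  using add_left_mono[of "Fin 0" c a] by simp

lemma pw_append: "path_weight w (xs @ v # ys) = path_weight w (xs @ [v]) + path_weight w (v # ys)"
proof (induction xs)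
  case Nil then show ?case by simp
next
  case (Cons a xs)
  then show ?case by (cases xs) (auto simp: add.assoc)
qed

lemma path_ge:
  assumes d: "\<forall>i\<le>n. w i i = Fin 0" and t: "\<forall>i\<le>n. \<forall>j\<le>n. \<forall>k\<le>n. w i j \<le> w i k + w k j"
  shows "set ns \<subseteq> {..n} \<Longrightarrow> ns \<noteq> [] \<Longrightarrow> w (hd ns) (last ns) \<le> path_weight w ns"
proof (induction ns)
  case Nil then show ?case by simp
next
  case (Cons a ns)
  show ?case
  proof (cases ns)
    case Nil then show ?thesis using d Cons by simp
  next
    case (Cons b r)
    have le: "w b (last ns) \<le> path_weight w ns" using Cons.IH Cons.prems Cons by auto
    have "last ns \<in> set ns" using Cons by simp
    then have "w a (last ns) \<le> w a b + w b (last ns)" using t Cons.prems Cons by auto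
    also have "\<dots> \<le> w a b + path_weight w ns" using le add_left_mono by blast
    finally show ?thesis using Cons by simp
  qed
qed

lemma closed_intro:
  assumes d: "\<forall>i\<le>n. w i i = Fin 0" and t: "\<forall>i\<le>n. \<forall>j\<le>n. \<forall>k\<le>n. w i j \<le> w i k + w k j"
  shows "closed_graph n w"
proof -
  have "consistent n w"
    unfolding consistent_def
  proof
    assume "\<exists>ns. set ns \<subseteq> {..n} \<and> 2 \<le> length ns \<and> hd ns = last ns \<and> path_weight w ns < Fin 0"
    then obtain ns where ns: "set ns \<subseteq> {..n}" "2 \<le> length ns" "hd ns = last ns" "path_weight w ns < Fin 0" by blast
    have ne: "ns \<noteq> []" using ns by auto
    then have "hd ns \<in> set ns" by simp
    then have "w (hd ns) (last ns) = Fin 0" using d ns by auto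
    with path_ge[OF d t ns(1) ne] ns(4) show False by simp
  qed
  then show ?thesis using d t unfolding closed_graph_def by blast
qed

definition addarc :: "graph \<Rightarrow> nat \<Rightarrow> nat \<Rightarrow> rat \<Rightarrow> graph" where
  "addarc H p q t = (\<lambda>a b. min (H a b) (H a q + Fin (-t) + H p b))"

lemma min_plus_q: "min (x::qinf) y + min u v = min (min (x+u) (x+v)) (min (y+u) (y+v))"
  by (cases x; cases y; cases u; cases v) (auto simp: min_def)

lemma aarc1: "(haq::qinf) \<le> hac + hcq \<Longrightarrow> haq + Fin (-t) + hpb \<le> hac + (hcq + Fin (-t) + hpb)"
  by (cases haq; cases hac; cases hcq; cases hpb) auto
lemma aarc2: "(hpb::qinf) \<le> hpc + hcb \<Longrightarrow> haq + Fin (-t) + hpb \<le> haq + Fin (-t) + hpc + hcb"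
  by (cases haq; cases hpc; cases hcb; cases hpb) auto
lemma aarc3: "Fin t \<le> (hpq::qinf) \<Longrightarrow> hpq \<le> hpc + hcq \<Longrightarrow> haq + Fin (-t) + hpb \<le> haq + Fin (-t) + hpc + (hcq + Fin (-t) + hpb)"
  by (cases haq; cases hpc; cases hcq; cases hpb; cases hpq) auto
lemma aarc4: "Fin t \<le> (hpq::qinf) \<Longrightarrow> hpq \<le> hpa + haq \<Longrightarrow> Fin 0 \<le> haq + Fin (-t) + hpa"
  by (cases haq; cases hpa; cases hpq) auto

lemma addarc_closed:
  assumes H: "closed_graph n H" and p: "p \<le> n" and q: "q \<le> n" and t: "Fin t \<le> H p q"
  shows "closed_graph n (addarc H p q t)"
proof (rule closed_intro)
  have d: "\<forall>i\<le>n. H i i = Fin 0" and tr: "\<forall>i\<le>n. \<forall>j\<le>n. \<forall>k\<le>n. H i j \<le> H i k + H k j"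
    using H unfolding closed_graph_def by auto
  show "\<forall>i\<le>n. addarc H p q t i i = Fin 0"
  proof (intro allI impI)
    fix i assume i: "i \<le> n"
    have "Fin 0 \<le> H i q + Fin (-t) + H p i" using aarc4[OF t] tr p q i by blast
    then show "addarc H p q t i i = Fin 0" using d i by (simp add: addarc_def min_def)
  qed
  show "\<forall>i\<le>n. \<forall>j\<le>n. \<forall>k\<le>n. addarc H p q t i j \<le> addarc H p q t i k + addarc H p q t k j"
  proof (intro allI impI)
    fix a b c assume abc: "a \<le> n" "b \<le> n" "c \<le> n"
    have 1: "H a b \<le> H a c + H c b" using tr abc by blast
    have 2: "H a q + Fin (-t) + H p b \<le> H a c + (H c q + Fin (-t) + H p b)"
      by (rule aarc1) (use tr abc q in blast)
    have 3: "H a q + Fin (-t) + H p b \<le> H a q + Fin (-t) + H p c + H c b"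
      by (rule aarc2) (use tr abc p in blast)
    have 4: "H a q + Fin (-t) + H p b \<le> H a q + Fin (-t) + H p c + (H c q + Fin (-t) + H p b)"
      by (rule aarc3[OF t]) (use tr abc p q in blast)
    show "addarc H p q t a b \<le> addarc H p q t a c + addarc H p q t c b"
      unfolding addarc_def min_plus_q using 1 2 3 4
      unfolding min.bounded_iff
      by (intro conjI min.coboundedI1[OF 1] min.coboundedI2[OF 2] min.coboundedI2[OF 3] min.coboundedI2[OF 4])
  qed
qed

lemma addarc_le: "addarc H p q t a b \<le> H a b" by (simp add: addarc_def)

lemma addarc_back: "closed_graph n H \<Longrightarrow> p \<le> n \<Longrightarrow> q \<le> n \<Longrightarrow> addarc H p q t q p \<le> Fin (-t)"
  unfolding addarc_def closed_graph_def by (simp add: min.coboundedI2)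


definition le_q :: "real \<Rightarrow> qinf \<Rightarrow> bool" where
  "le_q r v = (\<forall>b. v = Fin b \<longrightarrow> r \<le> of_rat b)"

lemma bd_of_alt: "bd_of n w = {x \<in> space n. \<forall>i\<le>n. \<forall>j\<le>n. le_q (x i - x j) (w i j)}"
  unfolding bd_of_def le_q_def by auto

lemma le_q_mono: "le_q r u \<Longrightarrow> u \<le> v \<Longrightarrow> le_q r v"
  unfolding le_q_def by (cases u; cases v) (auto, meson of_rat_less_eq order_trans)

lemma bd_of_mono: "graph_le n K H \<Longrightarrow> bd_of n K \<subseteq> bd_of n H"
  unfolding bd_of_alt graph_le_def using le_q_mono by blast

lemma closed_nonempty:
  assumes H: "closed_graph n H"
  shows "bd_of n H \<noteq> {}"
proof -
  have d: "\<forall>i\<le>n. H i i = Fin 0" and tr: "\<forall>i\<le>n. \<forall>j\<le>n. \<forall>k\<le>n. H i j \<le> H i k + H k j"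
    using H unfolding closed_graph_def by auto
  have "\<forall>a\<in>{..n}. \<exists>r. (\<forall>u\<le>n. Fin r \<le> H a u) \<and> (\<exists>u\<le>n. H a u = Fin r)"
  proof
    fix a assume a: "a \<in> {..n}"
    define m where "m = Min (H a ` {..n})"
    have fin: "finite (H a ` {..n})" "H a ` {..n} \<noteq> {}" by auto
    have mle: "\<forall>u\<le>n. m \<le> H a u" using Min_le[OF fin(1)] m_def by auto
    have "m \<in> H a ` {..n}" using Min_in[OF fin] m_def by simp
    then obtain u where u: "u \<le> n" "H a u = m" by auto
    have "m \<le> Fin 0" using mle d a by force
    then obtain r where "m = Fin r" by (cases m) auto
    then show "\<exists>r. (\<forall>u\<le>n. Fin r \<le> H a u) \<and> (\<exists>u\<le>n. H a u = Fin r)" using mle u by auto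
  qed
  then obtain al where al: "\<forall>a\<in>{..n}. (\<forall>u\<le>n. Fin (al a) \<le> H a u) \<and> (\<exists>u\<le>n. H a u = Fin (al a))"
    by metis
  have alstep: "al a \<le> c + al b" if "a \<le> n" "b \<le> n" "H a b = Fin c" for a b c
  proof -
    have "b \<in> {..n}" using that by simp
    then obtain u where u: "u \<le> n" "H b u = Fin (al b)" using al by blast
    have "Fin (al a) \<le> H a u" using al that u by auto
    also have "\<dots> \<le> H a b + H b u" using tr that u by blast
    finally show ?thesis using that u by simp
  qed
  have al0: "al 0 \<le> 0" using al d by force
  define M where "M = - al 0"
  define xr where "xr k = (case H k 0 of Fin r \<Rightarrow> min r (M + al k) | PInf \<Rightarrow> M + al k)" for k
  define x where "x k = (if k \<le> n then (of_rat (xr k) :: real) else 0)" for k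
  have xr0: "xr 0 = 0" unfolding xr_def M_def using d al0 by simp
  have key: "xr a - xr b \<le> c" if ab: "a \<le> n" "b \<le> n" "H a b = Fin c" for a b c
  proof -
    have s: "al a \<le> c + al b" using alstep ab by blast
    have t1: "H a 0 \<le> H a b + H b 0" using tr ab by blast
    show ?thesis
    proof (cases "H b 0")
      case (Fin rb)
      show ?thesis
      proof (cases "H a 0")
        case (Fin ra)
        then have "ra \<le> c + rb" using t1 \<open>H b 0 = Fin rb\<close> ab by simp
        then show ?thesis unfolding xr_def using Fin \<open>H b 0 = Fin rb\<close> s
          by (simp add: min_def)
      next
        case PInf
        then show ?thesis using t1 ab \<open>H b 0 = Fin rb\<close> by simp
      qed
    next
      case PInf
      show ?thesis unfolding xr_def using PInf s by (cases "H a 0") (auto simp: min_def)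
    qed
  qed
  have "x \<in> bd_of n H"
    unfolding bd_of_def space_def
  proof (intro CollectI conjI allI impI)
    fix i assume "i = 0 \<or> n < i" then show "x i = 0" unfolding x_def using xr0 by auto
  next
    fix i j b assume ij: "i \<le> n" "j \<le> n" "H i j = Fin b"
    have "xr i - xr j \<le> b" using key ij by blast
    then have "(of_rat (xr i - xr j) :: real) \<le> of_rat b" using of_rat_less_eq by blast
    then show "x i - x j \<le> of_rat b" unfolding x_def using ij by (simp add: of_rat_diff)
  qed
  then show ?thesis by blast
qed

lemma bound_lemma:
  assumes H: "closed_graph n H" and a: "a \<le> n" and b: "b \<le> n"
    and B: "\<forall>y\<in>bd_of n H. y a - y b \<le> of_rat \<beta>"
  shows "H a b \<le> Fin \<beta>"
proof (rule ccontr)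
  assume "\<not> H a b \<le> Fin \<beta>"
  then have lt: "Fin \<beta> < H a b" by simp
  define t where "t = (case H a b of Fin s \<Rightarrow> s | PInf \<Rightarrow> \<beta> + 1)"
  have t1: "Fin t \<le> H a b" and t2: "\<beta> < t" using lt unfolding t_def by (cases "H a b"; simp)+
  have K: "closed_graph n (addarc H a b t)" using addarc_closed[OF H a b t1] .
  obtain y where y: "y \<in> bd_of n (addarc H a b t)" using closed_nonempty[OF K] by blast
  have "y \<in> bd_of n H" using y bd_of_mono[of n "addarc H a b t" H] addarc_le
    unfolding graph_le_def by blast
  then have "y a - y b \<le> of_rat \<beta>" using B by blast
  moreover have "le_q (y b - y a) (addarc H a b t b a)" using y a b unfolding bd_of_alt by blast
  then have "le_q (y b - y a) (Fin (-t))" using le_q_mono addarc_back[OF H a b] by blast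
  then have "y b - y a \<le> - of_rat t" unfolding le_q_def by (simp add: of_rat_minus)
  moreover have "(of_rat \<beta> :: real) < of_rat t" using t2 of_rat_less by blast
  ultimately show False by simp
qed


definition Pth :: "nat \<Rightarrow> nat \<Rightarrow> nat \<Rightarrow> nat list set" where
  "Pth n a b = {ns. set ns \<subseteq> {..n} \<and> ns \<noteq> [] \<and> hd ns = a \<and> last ns = b}"

lemma short_path:
  assumes R: "consistent n R"
  shows "ns \<in> Pth n a b \<Longrightarrow> \<exists>ms\<in>Pth n a b. length ms \<le> Suc n \<and> path_weight R ms \<le> path_weight R ns"
proof (induction "length ns" arbitrary: ns rule: less_induct)
  case less
  show ?case
  proof (cases "length ns \<le> Suc n")
    case True then show ?thesis using less.prems by blast
  next
    case False
    have "set ns \<subseteq> {..n}" using less.prems unfolding Pth_def by blast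
    then have "card (set ns) \<le> card {..n}" by (intro card_mono) auto
    then have "card (set ns) \<le> Suc n" by simp
    then have "\<not> distinct ns" using False distinct_card by fastforce
    then obtain xs ys zs y where ns: "ns = xs @ [y] @ ys @ [y] @ zs" using not_distinct_decomp by blast
    define ms where "ms = xs @ [y] @ zs"
    have ms: "ms \<in> Pth n a b" using less.prems unfolding Pth_def ms_def ns
      by (cases xs; cases zs) auto
    have cyc: "Fin 0 \<le> path_weight R (y # ys @ [y])"
    proof -
      have "set (y # ys @ [y]) \<subseteq> {..n}" using less.prems unfolding Pth_def ns by auto
      moreover have "2 \<le> length (y # ys @ [y])" "hd (y # ys @ [y]) = last (y # ys @ [y])" by auto
      ultimately show ?thesis using R unfolding consistent_def by (meson not_le)
    qed
    have "path_weight R ns = path_weight R (xs @ [y]) + (path_weight R (y # ys @ [y]) + path_weight R (y # zs))"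
      unfolding ns using pw_append[of R xs y "ys @ [y] @ zs"] pw_append[of R "y # ys" y zs] by simp
    moreover have "path_weight R ms = path_weight R (xs @ [y]) + path_weight R (y # zs)"
      unfolding ms_def using pw_append[of R xs y zs] by simp
    moreover have "path_weight R (y # zs) \<le> path_weight R (y # ys @ [y]) + path_weight R (y # zs)"
      using q_nonneg_add[OF cyc] by (simp add: add.commute)
    ultimately have le: "path_weight R ms \<le> path_weight R ns"
      by (simp add: add_left_mono)
    have "length ms < length ns" unfolding ms_def ns by simp
    then obtain ms' where "ms' \<in> Pth n a b" "length ms' \<le> Suc n" "path_weight R ms' \<le> path_weight R ms"
      using less.hyps ms by blast
    then show ?thesis using le order_trans by blast
  qed
qed

definition Dc :: "nat \<Rightarrow> graph \<Rightarrow> graph" where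
  "Dc n R a b = Min (insert PInf (path_weight R ` {ns \<in> Pth n a b. length ns \<le> Suc n}))"

lemma Dc_finite: "finite (insert PInf (path_weight R ` {ns \<in> Pth n a b. length ns \<le> Suc n}))"
proof -
  have "{ns \<in> Pth n a b. length ns \<le> Suc n} \<subseteq> {xs. set xs \<subseteq> {..n} \<and> length xs \<le> Suc n}"
    unfolding Pth_def by auto
  then show ?thesis using finite_lists_length_le[of "{..n}" "Suc n"] finite_subset by blast
qed

lemma Dc_le: "consistent n R \<Longrightarrow> ns \<in> Pth n a b \<Longrightarrow> Dc n R a b \<le> path_weight R ns"
proof -
  assume R: "consistent n R" and ns: "ns \<in> Pth n a b"
  obtain ms where ms: "ms \<in> Pth n a b" "length ms \<le> Suc n" "path_weight R ms \<le> path_weight R ns"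
    using short_path[OF R ns] by blast
  have "path_weight R ms \<in> insert PInf (path_weight R ` {ns \<in> Pth n a b. length ns \<le> Suc n})"
    using ms by blast
  then have "Dc n R a b \<le> path_weight R ms" unfolding Dc_def using Min_le[OF Dc_finite] by blast
  then show ?thesis using ms(3) by (rule order_trans)
qed

lemma Dc_path: "Dc n R a b = PInf \<or> (\<exists>ns\<in>Pth n a b. path_weight R ns = Dc n R a b)"
  using Min_in[OF Dc_finite[of R n a b]] unfolding Dc_def by auto

lemma Dc_closed:
  assumes R: "consistent n R"
  shows "closed_graph n (Dc n R)"
proof (rule closed_intro)
  show "\<forall>i\<le>n. Dc n R i i = Fin 0"
  proof (intro allI impI)
    fix i assume i: "i \<le> n"
    have "[i] \<in> Pth n i i" unfolding Pth_def using i by auto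
    then have le: "Dc n R i i \<le> Fin 0" using Dc_le[OF R] by fastforce
    have "Fin 0 \<le> Dc n R i i"
      using Dc_path[of n R i i]
    proof
      assume "\<exists>ns\<in>Pth n i i. path_weight R ns = Dc n R i i"
      then obtain ns where ns: "ns \<in> Pth n i i" "path_weight R ns = Dc n R i i" by blast
      have ps: "set ns \<subseteq> {..n}" "ns \<noteq> []" "hd ns = i" "last ns = i" using ns(1) unfolding Pth_def by auto
      show ?thesis
      proof (cases "2 \<le> length ns")
        case True
        then have "\<not> path_weight R ns < Fin 0" using R ps unfolding consistent_def by metis
        then show ?thesis using ns(2) by simp
      next
        case False
        then obtain z where "ns = [z]" using ps(2) by (cases ns) (auto simp: Suc_le_eq)
        then show ?thesis using ns by simp
      qed
    qed simp
    then show "Dc n R i i = Fin 0" using le by simp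
  qed
  show "\<forall>i\<le>n. \<forall>j\<le>n. \<forall>k\<le>n. Dc n R i j \<le> Dc n R i k + Dc n R k j"
  proof (intro allI impI)
    fix a b c assume abc: "a \<le> n" "b \<le> n" "c \<le> n"
    show "Dc n R a b \<le> Dc n R a c + Dc n R c b"
    proof (cases "Dc n R a c = PInf \<or> Dc n R c b = PInf")
      case True then show ?thesis by auto
    next
      case False
      then obtain p1 p2 where p1: "p1 \<in> Pth n a c" "path_weight R p1 = Dc n R a c"
        and p2: "p2 \<in> Pth n c b" "path_weight R p2 = Dc n R c b"
        using Dc_path[of n R a c] Dc_path[of n R c b] by blast
      have q1: "set p1 \<subseteq> {..n}" "p1 \<noteq> []" "hd p1 = a" "last p1 = c" using p1(1) unfolding Pth_def by auto
      have q2: "set p2 \<subseteq> {..n}" "p2 \<noteq> []" "hd p2 = c" "last p2 = b" using p2(1) unfolding Pth_def by auto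
      define p1' where "p1' = butlast p1"
      have p1': "p1 = p1' @ [c]" using q1 append_butlast_last_id[of p1] unfolding p1'_def by simp
      define r where "r = tl p2"
      have r: "p2 = c # r" using q2 list.collapse[of p2] unfolding r_def by simp
      have "hd (p1' @ c # r) = a" using q1(3) p1' by (cases p1') auto
      moreover have "last (p1' @ c # r) = b" using q2(4) r by (cases r) auto
      moreover have "set (p1' @ c # r) \<subseteq> {..n}" using q1(1) q2(1) p1' r by auto
      ultimately have inP: "p1' @ c # r \<in> Pth n a b" unfolding Pth_def by auto
      have "path_weight R (p1' @ c # r) = Dc n R a c + Dc n R c b"
        using pw_append[of R p1' c r] p1 p2 p1' r by simp
      then show ?thesis using Dc_le[OF R inP] by simp
    qed
  qed
qed

lemma Dc_le_R: "consistent n R \<Longrightarrow> graph_le n (Dc n R) R"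
  unfolding graph_le_def
proof (intro allI impI)
  fix i j assume "consistent n R" "i \<le> n" "j \<le> n"
  moreover have "[i, j] \<in> Pth n i j" unfolding Pth_def using \<open>i \<le> n\<close> \<open>j \<le> n\<close> by auto
  ultimately show "Dc n R i j \<le> R i j" using Dc_le by fastforce
qed

lemma telescope:
  assumes x: "x \<in> bd_of n R"
  shows "ns \<in> Pth n a b \<Longrightarrow> path_weight R ns = Fin s \<Longrightarrow> x a - x b \<le> of_rat s"
proof (induction ns arbitrary: a s)
  case Nil then show ?case unfolding Pth_def by simp
next
  case (Cons c ns)
  show ?case
  proof (cases ns)
    case Nil then show ?thesis using Cons.prems by (auto simp: Pth_def)
  next
    case (Cons d r)
    obtain s1 s2 where s: "R c d = Fin s1" "path_weight R ns = Fin s2" "s = s1 + s2"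
    proof -
      have "R c d + path_weight R ns = Fin s" using Cons.prems(2) Cons by simp
      then show ?thesis using q_plus_fin that by blast
    qed
    have ns: "ns \<in> Pth n d b" using Cons.prems(1) Cons unfolding Pth_def by auto
    have 1: "x d - x b \<le> of_rat s2" using Cons.IH[OF ns s(2)] .
    have "c = a" "c \<le> n" "d \<le> n" using Cons.prems(1) Cons unfolding Pth_def by auto
    then have 2: "x a - x d \<le> of_rat s1" using x s(1) unfolding bd_of_def by auto
    show ?thesis using 1 2 s(3) by (simp add: of_rat_add)
  qed
qed

lemma closure_bd:
  assumes sub: "subgraph n R G" and cl: "is_closure n R G"
  shows "bd_of n R = bd_of n G"
proof
  have R: "consistent n R" using cl unfolding is_closure_def by blast
  have DG: "graph_le n (Dc n R) G" using cl Dc_closed[OF R] Dc_le_R[OF R] unfolding is_closure_def by blast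
  show "bd_of n R \<subseteq> bd_of n G"
  proof
    fix x assume x: "x \<in> bd_of n R"
    show "x \<in> bd_of n G" unfolding bd_of_def
    proof (intro CollectI conjI allI impI)
      show "x \<in> space n" using x unfolding bd_of_def by blast
      fix i j g assume ij: "i \<le> n" "j \<le> n" "G i j = Fin g"
      have le: "Dc n R i j \<le> Fin g" using DG ij unfolding graph_le_def by metis
      then obtain ns where ns: "ns \<in> Pth n i j" "path_weight R ns = Dc n R i j"
        using Dc_path[of n R i j] by auto
      obtain d where d: "Dc n R i j = Fin d" "d \<le> g" using le by (cases "Dc n R i j") auto
      have "x i - x j \<le> of_rat d" using telescope[OF x ns(1)] ns(2) d by simp
      also have "\<dots> \<le> of_rat g" using d of_rat_less_eq by blast
      finally show "x i - x j \<le> of_rat g" .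
    qed
  qed
  show "bd_of n G \<subseteq> bd_of n R"
  proof
    fix x assume x: "x \<in> bd_of n G"
    show "x \<in> bd_of n R" unfolding bd_of_def
    proof (intro CollectI conjI allI impI)
      show "x \<in> space n" using x unfolding bd_of_def by blast
      fix i j g assume ij: "i \<le> n" "j \<le> n" "R i j = Fin g"
      then have "G i j = Fin g" using sub unfolding subgraph_def is_arc_def by fastforce
      then show "x i - x j \<le> of_rat g" using x ij unfolding bd_of_def by blast
    qed
  qed
qed


lemma le_q_Fin[simp]: "le_q r (Fin s) \<longleftrightarrow> r \<le> of_rat s"
  unfolding le_q_def by simp

lemma join_closed:
  assumes G1: "closed_graph n G1" and G2: "closed_graph n G2"
  shows "closed_graph n (graph_join G1 G2)"
proof (rule closed_intro)
  show "\<forall>i\<le>n. graph_join G1 G2 i i = Fin 0"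
    using G1 G2 unfolding closed_graph_def graph_join_def by simp
  show "\<forall>i\<le>n. \<forall>j\<le>n. \<forall>k\<le>n. graph_join G1 G2 i j \<le> graph_join G1 G2 i k + graph_join G1 G2 k j"
  proof (intro allI impI)
    fix a b c assume abc: "a \<le> n" "b \<le> n" "c \<le> n"
    have 1: "G1 a b \<le> G1 a c + G1 c b" and 2: "G2 a b \<le> G2 a c + G2 c b"
      using G1 G2 abc unfolding closed_graph_def by blast+
    have "G1 a c + G1 c b \<le> max (G1 a c) (G2 a c) + max (G1 c b) (G2 c b)"
      by (intro add_mono) auto
    moreover have "G2 a c + G2 c b \<le> max (G1 a c) (G2 a c) + max (G1 c b) (G2 c b)"
      by (intro add_mono) auto
    ultimately show "graph_join G1 G2 a b \<le> graph_join G1 G2 a c + graph_join G1 G2 c b"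
      unfolding graph_join_def using 1 2 by (metis max.bounded_iff order_trans)
  qed
qed

fun the_fin :: "qinf \<Rightarrow> rat" where
  "the_fin (Fin r) = r" | "the_fin PInf = 0"

definition cstr :: "nat \<Rightarrow> nat \<Rightarrow> rat \<Rightarrow> bd_constraint" where
  "cstr a b r = (if b = 0 then Upper a r else if a = 0 then Lower b r else Diff a b r)"

lemma sat_cstr: "x 0 = 0 \<Longrightarrow> a \<noteq> b \<Longrightarrow> sat x (cstr a b r) \<longleftrightarrow> x a - x b \<le> of_rat r"
  unfolding cstr_def by auto

lemma valid_cstr: "a \<le> n \<Longrightarrow> b \<le> n \<Longrightarrow> a \<noteq> b \<Longrightarrow> valid_constraint n (cstr a b r)"
  unfolding cstr_def by auto

lemma join_BD:
  fixes J :: graph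
  assumes J: "closed_graph n J"
  shows "bd_of n J \<in> BD n"
proof -
  define S where "S = {(a,b). a \<le> n \<and> b \<le> n \<and> a \<noteq> b \<and> J a b \<noteq> PInf}"
  define C where "C = (\<lambda>(a,b). cstr a b (the_fin (J a b))) ` S"
  have "S \<subseteq> {..n} \<times> {..n}" unfolding S_def by auto
  then have "finite S" using finite_subset by blast
  then have fC: "finite C" unfolding C_def by simp
  have vC: "\<forall>c\<in>C. valid_constraint n c" unfolding C_def S_def using valid_cstr by auto
  have "bd_of n J = {x \<in> space n. \<forall>c\<in>C. sat x c}"
  proof (intro set_eqI iffI)
    fix x assume x: "x \<in> bd_of n J"
    then have sp: "x \<in> space n" and x0: "x 0 = 0" unfolding bd_of_def space_def by auto
    have "\<forall>c\<in>C. sat x c"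
    proof
      fix c assume "c \<in> C"
      then obtain a b where ab: "(a,b) \<in> S" "c = cstr a b (the_fin (J a b))" unfolding C_def by auto
      then have ab': "a \<le> n" "b \<le> n" "a \<noteq> b" "J a b = Fin (the_fin (J a b))"
        unfolding S_def by (auto, cases "J a b", auto)
      then show "sat x c" using ab(2) sat_cstr[of x a b, OF x0 ab'(3)] x unfolding bd_of_def by auto
    qed
    then show "x \<in> {x \<in> space n. \<forall>c\<in>C. sat x c}" using sp by blast
  next
    fix x assume x: "x \<in> {x \<in> space n. \<forall>c\<in>C. sat x c}"
    then have sp: "x \<in> space n" and x0: "x 0 = 0" and sat: "\<forall>c\<in>C. sat x c" unfolding space_def by auto
    show "x \<in> bd_of n J" unfolding bd_of_def
    proof (intro CollectI conjI allI impI sp)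
      fix a b r assume ab: "a \<le> n" "b \<le> n" "J a b = Fin r"
      show "x a - x b \<le> of_rat r"
      proof (cases "a = b")
        case True
        then have "r = 0" using J ab unfolding closed_graph_def by auto
        then show ?thesis using True by simp
      next
        case False
        then have "(a,b) \<in> S" unfolding S_def using ab by auto
        then have "sat x (cstr a b r)" using sat ab unfolding C_def by force
        then show ?thesis using sat_cstr[of x a b, OF x0 False] by simp
      qed
    qed
  qed
  then show ?thesis unfolding BD_def using fC vC by blast
qed

lemma hull_min:
  assumes G1: "closed_graph n G1" and G2: "closed_graph n G2"
    and T: "T \<in> BD n" and sub: "bd_of n G1 \<union> bd_of n G2 \<subseteq> T"
  shows "bd_of n (graph_join G1 G2) \<subseteq> T"
proof
  fix x assume x: "x \<in> bd_of n (graph_join G1 G2)"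
  obtain C where C: "finite C" "\<forall>c\<in>C. valid_constraint n c" "T = {x \<in> space n. \<forall>c\<in>C. sat x c}"
    using T unfolding BD_def by blast
  have hb: "x a - x b \<le> of_rat \<beta>" if ab: "a \<le> n" "b \<le> n" and B: "\<forall>y\<in>T. y a - y b \<le> of_rat \<beta>" for a b \<beta>
  proof -
    have "G1 a b \<le> Fin \<beta>" using bound_lemma[OF G1 ab] B sub by blast
    moreover have "G2 a b \<le> Fin \<beta>" using bound_lemma[OF G2 ab] B sub by blast
    ultimately have "graph_join G1 G2 a b \<le> Fin \<beta>" unfolding graph_join_def by simp
    moreover have "le_q (x a - x b) (graph_join G1 G2 a b)" using x ab unfolding bd_of_alt by blast
    ultimately have "le_q (x a - x b) (Fin \<beta>)" using le_q_mono by blast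
    then show ?thesis by simp
  qed
  have sp: "x \<in> space n" and x0: "x 0 = 0" using x unfolding bd_of_def space_def by auto
  have yT: "y 0 = 0 \<and> (\<forall>c\<in>C. sat y c)" if "y \<in> T" for y using that C(3) unfolding space_def by auto
  have "\<forall>c\<in>C. sat x c"
  proof
    fix c assume c: "c \<in> C"
    show "sat x c"
    proof (cases c)
      case (Upper i \<beta>)
      then have i: "i \<le> n" using C(2) c by auto
      have "\<forall>y\<in>T. y i - y 0 \<le> of_rat \<beta>" using yT c Upper by fastforce
      then have "x i - x 0 \<le> of_rat \<beta>" using hb[OF i, of 0] by simp
      then show ?thesis using x0 Upper by simp
    next
      case (Lower i \<beta>)
      then have i: "i \<le> n" using C(2) c by auto
      have "\<forall>y\<in>T. y 0 - y i \<le> of_rat \<beta>" using yT c Lower by fastforce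
      then have "x 0 - x i \<le> of_rat \<beta>" using hb[OF _ i, of 0] by simp
      then show ?thesis using x0 Lower by simp
    next
      case (Diff i j \<beta>)
      then have ij: "i \<le> n" "j \<le> n" using C(2) c by auto
      have "\<forall>y\<in>T. y i - y j \<le> of_rat \<beta>" using yT c Diff by fastforce
      then show ?thesis using hb[OF ij] Diff by simp
    qed
  qed
  then show "x \<in> T" using C(3) sp by blast
qed


lemma gap: "Fin a < u \<Longrightarrow> \<exists>e>0. \<forall>e'. 0 < e' \<and> e' \<le> e \<longrightarrow> Fin (a + e') \<le> u"
proof (cases u)
  case (Fin s)
  assume "Fin a < u"
  then show ?thesis using Fin by (intro exI[of _ "s - a"]) auto
next
  case PInf
  then show ?thesis by (intro exI[of _ 1]) auto
qed

lemma sum_split: "Fin (t1 + t2) \<le> (u::qinf) + v \<Longrightarrow> Fin t2 \<le> v + Fin (-t1) + u"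
  by (cases u; cases v) auto

lemma notin_bd: "x \<in> space n \<Longrightarrow> x \<notin> bd_of n R \<Longrightarrow>
   \<exists>i j r. i \<le> n \<and> j \<le> n \<and> R i j = Fin r \<and> of_rat r < x i - x j"
  unfolding bd_of_def by (auto simp: not_le)

theorem theorem6:
  fixes n :: nat and bd1 bd2 :: "(nat \<Rightarrow> real) set" and G1 G2 R1 R2 :: graph
  assumes bd1: "bd1 \<in> BD n" "bd1 \<noteq> {}"
    and bd2: "bd2 \<in> BD n" "bd2 \<noteq> {}"
    and G1: "closed_graph n G1" "represents n G1 bd1"
    and G2: "closed_graph n G2" "represents n G2 bd2"
    and R1: "subgraph n R1 G1" "is_closure n R1 G1"
    and R2: "subgraph n R2 G2" "is_closure n R2 G2"
  shows "bd_hull n bd1 bd2 \<noteq> bd1 \<union> bd2 \<longleftrightarrow>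
    (\<exists>i j k l. is_arc n R1 i j \<and> is_arc n R2 k l
       \<and> G1 i j < G2 i j \<and> G2 k l < G1 k l
       \<and> G1 i j + G2 k l < graph_join G1 G2 i l + graph_join G1 G2 k j)"
proof -
  define J where "J = graph_join G1 G2"
  define H where "H = bd_of n J"
  have b1: "bd1 = bd_of n G1" and b2: "bd2 = bd_of n G2" using G1 G2 unfolding represents_def by auto
  have Jc: "closed_graph n J" unfolding J_def using join_closed[OF G1(1) G2(1)] .
  have sub: "bd1 \<union> bd2 \<subseteq> H" unfolding H_def b1 b2 J_def
    by (intro Un_least bd_of_mono) (auto simp: graph_le_def graph_join_def)
  have Hmin: "\<forall>T\<in>BD n. bd1 \<union> bd2 \<subseteq> T \<longrightarrow> H \<subseteq> T"
    unfolding H_def J_def b1 b2 using hull_min[OF G1(1) G2(1)] by blast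
  have HBD: "H \<in> BD n" unfolding H_def using join_BD[OF Jc] .
  have hull: "bd_hull n bd1 bd2 = H"
    unfolding bd_hull_def
  proof (rule the_equality)
    show "H \<in> BD n \<and> bd1 \<union> bd2 \<subseteq> H \<and> (\<forall>T\<in>BD n. bd1 \<union> bd2 \<subseteq> T \<longrightarrow> H \<subseteq> T)"
      using HBD sub Hmin by blast
    fix S assume S: "S \<in> BD n \<and> bd1 \<union> bd2 \<subseteq> S \<and> (\<forall>T\<in>BD n. bd1 \<union> bd2 \<subseteq> T \<longrightarrow> S \<subseteq> T)"
    then show "S = H" using HBD sub Hmin by blast
  qed
  have c1: "bd1 = bd_of n R1" using closure_bd[OF R1] b1 by simp
  have c2: "bd2 = bd_of n R2" using closure_bd[OF R2] b2 by simp
  have xJ: "le_q (x a - x b) (J a b)" if "x \<in> H" "a \<le> n" "b \<le> n" for x a b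
    using that unfolding H_def bd_of_alt by blast
  show ?thesis unfolding hull J_def[symmetric]
  proof
    assume "H \<noteq> bd1 \<union> bd2"
    then obtain x where x: "x \<in> H" "x \<notin> bd1" "x \<notin> bd2" using sub by blast
    have sp: "x \<in> space n" using x unfolding H_def bd_of_def by blast
    obtain i j r1 where ij: "i \<le> n" "j \<le> n" "R1 i j = Fin r1" "of_rat r1 < x i - x j"
      using notin_bd[OF sp] x(2) c1 by blast
    obtain k l r2 where kl: "k \<le> n" "l \<le> n" "R2 k l = Fin r2" "of_rat r2 < x k - x l"
      using notin_bd[OF sp] x(3) c2 by blast
    have a1: "is_arc n R1 i j" using ij unfolding is_arc_def by simp
    have a2: "is_arc n R2 k l" using kl unfolding is_arc_def by simp
    have g1: "G1 i j = Fin r1" using a1 R1(1) ij unfolding subgraph_def by metis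
    have g2: "G2 k l = Fin r2" using a2 R2(1) kl unfolding subgraph_def by metis
    have lt1: "G1 i j < G2 i j"
    proof (rule ccontr)
      assume "\<not> G1 i j < G2 i j"
      then have "J i j = Fin r1" unfolding J_def graph_join_def using g1 by (auto simp: max_def not_less)
      then show False using xJ[OF x(1) ij(1,2)] ij(4) by simp
    qed
    have lt2: "G2 k l < G1 k l"
    proof (rule ccontr)
      assume "\<not> G2 k l < G1 k l"
      then have "J k l = Fin r2" unfolding J_def graph_join_def using g2 by (auto simp: max_def not_less)
      then show False using xJ[OF x(1) kl(1,2)] kl(4) by simp
    qed
    have lt3: "G1 i j + G2 k l < J i l + J k j"
    proof (cases "J i l"; cases "J k j")
      fix s t assume st: "J i l = Fin s" "J k j = Fin t"
      have "x i - x l \<le> of_rat s" "x k - x j \<le> of_rat t"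
        using xJ[OF x(1) ij(1) kl(2)] xJ[OF x(1) kl(1) ij(2)] st by auto
      then have "(of_rat (r1 + r2) :: real) < of_rat (s + t)" using ij(4) kl(4) by (simp add: of_rat_add)
      then have "r1 + r2 < s + t" using of_rat_less by blast
      then show ?thesis using st g1 g2 by simp
    qed (auto simp: g1 g2)
    show "\<exists>i j k l. is_arc n R1 i j \<and> is_arc n R2 k l \<and> G1 i j < G2 i j \<and> G2 k l < G1 k l
       \<and> G1 i j + G2 k l < J i l + J k j"
      using a1 a2 lt1 lt2 lt3 by blast
  next
    assume "\<exists>i j k l. is_arc n R1 i j \<and> is_arc n R2 k l \<and> G1 i j < G2 i j \<and> G2 k l < G1 k l
       \<and> G1 i j + G2 k l < J i l + J k j"
    then obtain i j k l where a1: "is_arc n R1 i j" and a2: "is_arc n R2 k l"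
      and lt1: "G1 i j < G2 i j" and lt2: "G2 k l < G1 k l" and lt3: "G1 i j + G2 k l < J i l + J k j"
      by blast
    have ij: "i \<le> n" "j \<le> n" and kl: "k \<le> n" "l \<le> n" using a1 a2 unfolding is_arc_def by auto
    obtain r1 where r1: "R1 i j = Fin r1" using a1 unfolding is_arc_def by (cases "R1 i j") auto
    obtain r2 where r2: "R2 k l = Fin r2" using a2 unfolding is_arc_def by (cases "R2 k l") auto
    have g1: "G1 i j = Fin r1" using a1 R1(1) r1 unfolding subgraph_def by metis
    have g2: "G2 k l = Fin r2" using a2 R2(1) r2 unfolding subgraph_def by metis
    have J1: "Fin r1 < J i j" using lt1 g1 unfolding J_def graph_join_def by simp
    have J2: "Fin r2 < J k l" using lt2 g2 unfolding J_def graph_join_def by simp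
    have J3: "Fin (r1 + r2) < J i l + J k j" using lt3 g1 g2 by simp
    obtain e1 where e1: "e1 > 0" "\<forall>e'. 0 < e' \<and> e' \<le> e1 \<longrightarrow> Fin (r1 + e') \<le> J i j" using gap[OF J1] by blast
    obtain e2 where e2: "e2 > 0" "\<forall>e'. 0 < e' \<and> e' \<le> e2 \<longrightarrow> Fin (r2 + e') \<le> J k l" using gap[OF J2] by blast
    obtain e3 where e3: "e3 > 0" "\<forall>e'. 0 < e' \<and> e' \<le> e3 \<longrightarrow> Fin (r1 + r2 + e') \<le> J i l + J k j" using gap[OF J3] by blast
    define e where "e = min e1 (min e2 e3) / 2"
    have e: "0 < e" "e \<le> e1" "e \<le> e2" "0 < 2 * e" "2 * e \<le> e3" unfolding e_def using e1 e2 e3 by auto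
    define t1 where "t1 = r1 + e"
    define t2 where "t2 = r2 + e"
    have t1: "Fin t1 \<le> J i j" using e1 e unfolding t1_def by blast
    have t2: "Fin t2 \<le> J k l" using e2 e unfolding t2_def by blast
    have "Fin (r1 + r2 + 2 * e) \<le> J i l + J k j" using e3 e by blast
    then have t3: "Fin (t1 + t2) \<le> J i l + J k j" unfolding t1_def t2_def by (simp add: algebra_simps)
    define K1 where "K1 = addarc J i j t1"
    have K1c: "closed_graph n K1" unfolding K1_def using addarc_closed[OF Jc ij t1] .
    have "Fin t2 \<le> J k j + Fin (-t1) + J i l" using sum_split[OF t3] .
    then have t2': "Fin t2 \<le> K1 k l" unfolding K1_def addarc_def using t2 by simp
    define K2 where "K2 = addarc K1 k l t2"
    have K2c: "closed_graph n K2" unfolding K2_def using addarc_closed[OF K1c kl t2'] .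
    obtain x where x: "x \<in> bd_of n K2" using closed_nonempty[OF K2c] by blast
    have "graph_le n K2 J" unfolding graph_le_def K2_def K1_def
      using addarc_le order_trans by metis
    then have xH: "x \<in> H" unfolding H_def using bd_of_mono x by blast
    have "K2 j i \<le> Fin (-t1)" unfolding K2_def
      using addarc_le[of K1 k l t2 j i] addarc_back[OF Jc ij, of t1] K1_def order_trans by metis
    then have "le_q (x j - x i) (Fin (-t1))" using x ij le_q_mono unfolding bd_of_alt by blast
    then have q1: "x i - x j \<ge> of_rat t1" by (simp add: of_rat_minus)
    have "K2 l k \<le> Fin (-t2)" unfolding K2_def using addarc_back[OF K1c kl] .
    then have "le_q (x l - x k) (Fin (-t2))" using x kl le_q_mono unfolding bd_of_alt by blast
    then have q2: "x k - x l \<ge> of_rat t2" by (simp add: of_rat_minus)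
    have "(of_rat r1 :: real) < of_rat t1" "(of_rat r2 :: real) < of_rat t2"
      unfolding t1_def t2_def using e(1) by (simp_all add: of_rat_less)
    then have "x \<notin> bd1" "x \<notin> bd2" using q1 q2 g1 g2 ij kl unfolding b1 b2 bd_of_def by fastforce+
    then show "H \<noteq> bd1 \<union> bd2" using xH by blast
  qed
qed

end
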